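(* Let $G$ be a graph with $n$ vertices. If $G$ admits a $B_k$-EPG representation, then it admits a $B_k$-EPG representation on a grid of size at most $4n(k+1)\times 4n(k+1)$; and if $G$ admits a Helly $B_k$-EPG representation, then it admits a Helly $B_k$-EPG representation on a grid of size at most $4n(k+1)\times 4n(k+1)$.
   Context: A grid is the set of integer points of the plane; a grid edge joins two grid points at distance $1$. A path in the grid is a sequence of distinct grid edges in which consecutive edges share exactly one grid point and non-consecutive edges share none; a bend is a pair of consecutive edges with different directions (horizontal/vertical). An EPG representation of $G$ is a family $(P_v)_{v\in V(G)}$ of grid paths such that distinct $u,v$ are adjacent iff $P_u,P_v$ share a grid edge; it is $B_k$-EPG if every path has at most $k$ bends, and Helly if every subfamily of pairwise edge-intersecting paths has a grid edge common to all its members. A grid of size $a\times b$ consists of $a$ columns and $b$ rows of grid points. *)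

theory Defs
  imports Main
begin

type_synonym gpoint = "int \<times> int"
type_synonym gedge = "gpoint set"

definition grid_edge :: "gedge \<Rightarrow> bool" where
  "grid_edge e \<longleftrightarrow> (\<exists>p q. e = {p, q} \<and> \<bar>fst p - fst q\<bar> + \<bar>snd p - snd q\<bar> = 1)"

definition grid_path :: "gedge list \<Rightarrow> bool" where
  "grid_path es \<longleftrightarrow> es \<noteq> [] \<and> (\<forall>e\<in>set es. grid_edge e) \<and> distinct es \<and>
     (\<forall>i. Suc i < length es \<longrightarrow> card (es ! i \<inter> es ! Suc i) = 1) \<and>
     (\<forall>i j. Suc i < j \<and> j < length es \<longrightarrow> es ! i \<inter> es ! j = {})"

definition horizontal :: "gedge \<Rightarrow> bool" where
  "horizontal e \<longleftrightarrow> (\<forall>p\<in>e. \<forall>q\<in>e. snd p = snd q)"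

definition bends :: "gedge list \<Rightarrow> nat" where
  "bends es = card {i. Suc i < length es \<and> horizontal (es ! i) \<noteq> horizontal (es ! Suc i)}"

definition simple_graph :: "'a set \<Rightarrow> ('a \<Rightarrow> 'a \<Rightarrow> bool) \<Rightarrow> bool" where
  "simple_graph V E \<longleftrightarrow> finite V \<and> (\<forall>u v. E u v \<longrightarrow> u \<in> V \<and> v \<in> V \<and> u \<noteq> v \<and> E v u)"

definition EPG_rep :: "'a set \<Rightarrow> ('a \<Rightarrow> 'a \<Rightarrow> bool) \<Rightarrow> ('a \<Rightarrow> gedge list) \<Rightarrow> bool" where
  "EPG_rep V E P \<longleftrightarrow> (\<forall>v\<in>V. grid_path (P v)) \<and>
     (\<forall>u\<in>V. \<forall>v\<in>V. u \<noteq> v \<longrightarrow> (E u v \<longleftrightarrow> set (P u) \<inter> set (P v) \<noteq> {}))"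

definition Bk_EPG_rep :: "nat \<Rightarrow> 'a set \<Rightarrow> ('a \<Rightarrow> 'a \<Rightarrow> bool) \<Rightarrow> ('a \<Rightarrow> gedge list) \<Rightarrow> bool" where
  "Bk_EPG_rep k V E P \<longleftrightarrow> EPG_rep V E P \<and> (\<forall>v\<in>V. bends (P v) \<le> k)"

definition helly_rep :: "'a set \<Rightarrow> ('a \<Rightarrow> gedge list) \<Rightarrow> bool" where
  "helly_rep V P \<longleftrightarrow> (\<forall>S\<subseteq>V. (\<forall>u\<in>S. \<forall>v\<in>S. set (P u) \<inter> set (P v) \<noteq> {})
      \<longrightarrow> (\<exists>e. \<forall>v\<in>S. e \<in> set (P v)))"

definition on_grid :: "'a set \<Rightarrow> ('a \<Rightarrow> gedge list) \<Rightarrow> nat \<Rightarrow> nat \<Rightarrow> bool" where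
  "on_grid V P a b \<longleftrightarrow> (\<exists>x0 y0. \<forall>v\<in>V. \<forall>e\<in>set (P v). \<forall>p\<in>e.
      x0 \<le> fst p \<and> fst p < x0 + int a \<and> y0 \<le> snd p \<and> snd p < y0 + int b)"

definition on_grid_at_most :: "'a set \<Rightarrow> ('a \<Rightarrow> gedge list) \<Rightarrow> nat \<Rightarrow> bool" where
  "on_grid_at_most V P N \<longleftrightarrow> (\<exists>a b. a \<le> N \<and> b \<le> N \<and> on_grid V P a b)"

end

theory Submission
  imports Defs
begin

definition adj :: "gpoint \<Rightarrow> gpoint \<Rightarrow> bool" where
  "adj p q \<longleftrightarrow> \<bar>fst p - fst q\<bar> + \<bar>snd p - snd q\<bar> = 1"

fun edges :: "gpoint list \<Rightarrow> gedge list" where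
  "edges (a # b # xs) = {a, b} # edges (b # xs)"
| "edges _ = []"

definition valid :: "gpoint list \<Rightarrow> bool" where
  "valid ps \<longleftrightarrow> 2 \<le> length ps \<and> distinct ps \<and> (\<forall>i. Suc i < length ps \<longrightarrow> adj (ps ! i) (ps ! Suc i))"

lemma length_edges[simp]: "length (edges xs) = length xs - 1"
  by (induction xs rule: edges.induct) auto

lemma nth_edges: "Suc i < length xs \<Longrightarrow> edges xs ! i = {xs ! i, xs ! Suc i}"
proof (induction xs arbitrary: i rule: edges.induct)
  case (1 a b xs)
  then show ?case by (cases i) auto
qed auto

lemma set_edges: "set (edges xs) = {{xs ! i, xs ! Suc i} | i. Suc i < length xs}"
proof -
  have "set (edges xs) = {edges xs ! i | i. i < length (edges xs)}"
    by (auto simp: in_set_conv_nth)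
  also have "\<dots> = {{xs ! i, xs ! Suc i} | i. Suc i < length xs}"
  proof (intro set_eqI iffI)
    fix e assume "e \<in> {edges xs ! i | i. i < length (edges xs)}"
    then obtain i where "i < length (edges xs)" "e = edges xs ! i" by blast
    then show "e \<in> {{xs ! i, xs ! Suc i} | i. Suc i < length xs}" by (auto simp: nth_edges)
  next
    fix e assume "e \<in> {{xs ! i, xs ! Suc i} | i. Suc i < length xs}"
    then obtain i where "Suc i < length xs" "e = {xs ! i, xs ! Suc i}" by blast
    then show "e \<in> {edges xs ! i | i. i < length (edges xs)}" by (auto simp: nth_edges intro!: exI[of _ i])
  qed
  finally show ?thesis .
qed

lemma adj_sym: "adj p q \<Longrightarrow> adj q p" by (auto simp: adj_def)
lemma adj_neq: "adj p q \<Longrightarrow> p \<noteq> q" by (auto simp: adj_def)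

lemma grid_edge_iff: "grid_edge e \<longleftrightarrow> (\<exists>p q. e = {p,q} \<and> adj p q)"
  by (simp add: grid_edge_def adj_def)

lemma dneq: "distinct xs \<Longrightarrow> i < length xs \<Longrightarrow> j < length xs \<Longrightarrow> i \<noteq> j \<Longrightarrow> xs ! i \<noteq> xs ! j"
  using nth_eq_iff_index_eq by blast

lemma valid_grid_path: assumes "valid ps" shows "grid_path (edges ps)"
proof -
  have d: "distinct ps" and l: "2 \<le> length ps" and a: "\<And>i. Suc i < length ps \<Longrightarrow> adj (ps ! i) (ps ! Suc i)"
    using assms by (auto simp: valid_def)
  have "length (edges ps) \<noteq> 0" using l by simp
  then have "edges ps \<noteq> []" by (metis list.size(3))
  moreover have "\<forall>e\<in>set (edges ps). grid_edge e"
  proof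
    fix e assume "e \<in> set (edges ps)"
    then obtain i where "Suc i < length ps" "e = {ps ! i, ps ! Suc i}" unfolding set_edges by blast
    then show "grid_edge e" using a unfolding grid_edge_iff by blast
  qed
  moreover have "distinct (edges ps)"
  proof (subst distinct_conv_nth, intro allI impI)
    fix i j assume ij: "i < length (edges ps)" "j < length (edges ps)" "i \<noteq> j"
    then have e: "edges ps ! i = {ps ! i, ps ! Suc i}" "edges ps ! j = {ps ! j, ps ! Suc j}"
      by (auto simp: nth_edges)
    show "edges ps ! i \<noteq> edges ps ! j"
    proof
      assume "edges ps ! i = edges ps ! j"
      then have "ps ! i \<in> {ps ! j, ps ! Suc j}" using e by auto
      then have "i = j \<or> i = Suc j" using d ij by (simp add: nth_eq_iff_index_eq; metis)
      moreover have "ps ! j \<in> {ps ! i, ps ! Suc i}" using e \<open>edges ps ! i = edges ps ! j\<close> by auto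
      then have "j = i \<or> j = Suc i" using d ij by (simp add: nth_eq_iff_index_eq; metis)
      ultimately show False using ij by auto
    qed
  qed
  moreover have "\<forall>i. Suc i < length (edges ps) \<longrightarrow> card (edges ps ! i \<inter> edges ps ! Suc i) = 1"
  proof (intro allI impI)
    fix i assume i: "Suc i < length (edges ps)"
    have "ps ! i \<noteq> ps ! Suc i" "ps ! i \<noteq> ps ! Suc (Suc i)" "ps ! Suc (Suc i) \<noteq> ps ! Suc i"
      using d i by (simp_all add: nth_eq_iff_index_eq)
    then have "edges ps ! i \<inter> edges ps ! Suc i = {ps ! Suc i}"
      using i by (auto simp: nth_edges)
    then show "card (edges ps ! i \<inter> edges ps ! Suc i) = 1" by simp
  qed
  moreover have "\<forall>i j. Suc i < j \<and> j < length (edges ps) \<longrightarrow> edges ps ! i \<inter> edges ps ! j = {}"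
  proof (intro allI impI)
    fix i j assume i: "Suc i < j \<and> j < length (edges ps)"
    have "ps ! i \<noteq> ps ! j" by (rule dneq[OF d]; use i in auto)
    have "ps ! i \<noteq> ps ! Suc j" by (rule dneq[OF d]; use i in auto)
    have "ps ! Suc i \<noteq> ps ! j" by (rule dneq[OF d]; use i in auto)
    have "ps ! Suc i \<noteq> ps ! Suc j" by (rule dneq[OF d]; use i in auto)
    note this \<open>ps ! i \<noteq> ps ! j\<close> \<open>ps ! i \<noteq> ps ! Suc j\<close> \<open>ps ! Suc i \<noteq> ps ! j\<close>
    then show "edges ps ! i \<inter> edges ps ! j = {}"
      using i by (auto simp: nth_edges)
  qed
  ultimately show ?thesis by (simp add: grid_path_def)
qed

lemma grid_path_tl: assumes "grid_path (e # es)" "es \<noteq> []" shows "grid_path es"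
proof -
  have "\<forall>i. Suc i < length es \<longrightarrow> card (es ! i \<inter> es ! Suc i) = 1"
  proof (intro allI impI)
    fix i assume "Suc i < length es"
    then have "Suc (Suc i) < length (e # es)" by simp
    then have "card ((e#es) ! Suc i \<inter> (e#es) ! Suc (Suc i)) = 1" using assms(1) unfolding grid_path_def by blast
    then show "card (es ! i \<inter> es ! Suc i) = 1" by simp
  qed
  moreover have "\<forall>i j. Suc i < j \<and> j < length es \<longrightarrow> es ! i \<inter> es ! j = {}"
  proof (intro allI impI)
    fix i j assume "Suc i < j \<and> j < length es"
    then have "Suc (Suc i) < Suc j \<and> Suc j < length (e # es)" by simp
    then have "(e#es) ! Suc i \<inter> (e#es) ! Suc j = {}" using assms(1) unfolding grid_path_def by blast
    then show "es ! i \<inter> es ! j = {}" by simp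
  qed
  ultimately show ?thesis using assms unfolding grid_path_def by auto
qed

lemma grid_path_valid: "grid_path es \<Longrightarrow> \<exists>ps. valid ps \<and> edges ps = es"
proof (induction es)
  case Nil
  then show ?case by (simp add: grid_path_def)
next
  case (Cons e es)
  have ge: "grid_edge e" using Cons.prems by (simp add: grid_path_def)
  then obtain p q where pq: "e = {p, q}" "adj p q" unfolding grid_edge_iff by blast
  show ?case
  proof (cases "es = []")
    case True
    have "valid [p, q]" using pq adj_neq[OF pq(2)] by (simp add: valid_def less_Suc_eq)
    then show ?thesis using True pq by (intro exI[of _ "[p,q]"]) auto
  next
    case False
    have gp: "grid_path es" using grid_path_tl[OF Cons.prems False] .
    obtain ps' where ps': "valid ps'" "edges ps' = es" using Cons.IH[OF gp] by blast
    have l2: "2 \<le> length ps'" using ps' by (simp add: valid_def)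
    have "Suc 0 < length (e # es)" using False by simp
    then have "card ((e # es) ! 0 \<inter> (e # es) ! Suc 0) = 1" using Cons.prems unfolding grid_path_def by blast
    then have c1: "card (e \<inter> es ! 0) = 1" by simp
    then obtain z where z: "e \<inter> es ! 0 = {z}" by (meson card_1_singletonE)
    have es0: "es ! 0 = {ps' ! 0, ps' ! 1}" using ps' l2 nth_edges[of 0 ps'] by auto
    have dis: "\<And>j. Suc 0 < j \<Longrightarrow> j < length (e # es) \<Longrightarrow> e \<inter> (e # es) ! j = {}"
    proof -
      fix j assume "Suc 0 < j" "j < length (e # es)"
      then have "(e # es) ! 0 \<inter> (e # es) ! j = {}" using Cons.prems unfolding grid_path_def by blast
      then show "e \<inter> (e # es) ! j = {}" by simp
    qed
    obtain ps'' where ps'': "valid ps''" "edges ps'' = es" "ps'' ! 0 = z"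
    proof (cases "z = ps' ! 0")
      case True then show ?thesis using that ps' by blast
    next
      case False
      then have z1: "z = ps' ! 1" using z es0 by auto
      show ?thesis
      proof (cases "length ps' = 2")
        case True
        define a where "a = ps' ! 0"
        define b where "b = ps' ! 1"
        have ab: "ps' = [a, b]" unfolding a_def b_def using True
          by (simp add: list_eq_iff_nth_eq less_Suc_eq numeral_2_eq_2 nth_Cons split: nat.splits)
        have "valid [b, a]" using ps'(1) ab by (auto simp: valid_def less_Suc_eq adj_sym)
        moreover have "edges [b, a] = es" using ps'(2) ab by auto
        ultimately show ?thesis using that z1 ab by auto
      next
        case False
        then have l3: "2 < length ps'" using l2 by auto
        have "es ! 1 = {ps' ! 1, ps' ! 2}" using ps' l3 nth_edges[of 1 ps'] by (auto simp: numeral_2_eq_2)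
        moreover have "2 < length (e # es)" using ps' l3 by auto
        then have "e \<inter> (e # es) ! 2 = {}" using dis[of 2] by simp
        then have "e \<inter> es ! 1 = {}" by (simp add: numeral_2_eq_2)
        ultimately have False using z z1 by auto
        then show ?thesis ..
      qed
    qed
    have l2'': "2 \<le> length ps''" using ps'' by (simp add: valid_def)
    have es0'': "es ! 0 = {z, ps'' ! 1}" using ps'' l2'' nth_edges[of 0 ps''] by auto
    have "z \<in> e" using z by auto
    then have "z = p \<or> z = q" using pq by auto
    then obtain w where w: "e = {w, z}" "adj w z"
    proof
      assume "z = p" then show ?thesis using that[of q] pq adj_sym by auto
    next
      assume "z = q" then show ?thesis using that[of p] pq by auto
    qed
    have wz: "w \<noteq> z" using adj_neq[OF w(2)] .
    have wnot: "w \<notin> set ps''"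
    proof
      assume "w \<in> set ps''"
      then obtain j where j: "j < length ps''" "ps'' ! j = w" by (auto simp: in_set_conv_nth)
      have "j \<noteq> 0" using j(2) wz ps''(3) by (metis)
      then obtain j' where j': "j = Suc j'" by (cases j) auto
      have ej: "es ! j' = {ps'' ! j', ps'' ! Suc j'}" using nth_edges[of j' ps''] j j' ps'' by auto
      show False
      proof (cases j')
        case 0
        then have "{w, z} \<subseteq> e \<inter> es ! 0" using ej j j' w es0'' by auto
        then show False using z wz by auto
      next
        case (Suc j'')
        have "j < length (e # es)" using j l2'' by (simp flip: ps''(2))
        then have "e \<inter> (e # es) ! j = {}" using dis[of j] Suc j' by simp
        then have "e \<inter> es ! j' = {}" using j' by simp
        then show False using ej j' w j by auto
      qed
    qed
    obtain rest where rest: "ps'' = z # rest" using ps''(3) l2'' by (cases ps'') auto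
    have "valid (w # ps'')"
      unfolding valid_def
    proof (intro conjI allI impI)
      show "2 \<le> length (w # ps'')" using l2'' by simp
      show "distinct (w # ps'')" using wnot ps''(1) by (simp add: valid_def)
      fix i assume i: "Suc i < length (w # ps'')"
      show "adj ((w # ps'') ! i) ((w # ps'') ! Suc i)"
      proof (cases i)
        case 0 then show ?thesis using w(2) rest by simp
      next
        case (Suc i') then show ?thesis using i ps''(1) by (simp add: valid_def)
      qed
    qed
    moreover have "edges (w # ps'') = e # es" using rest ps''(2) w(1) by auto
    ultimately show ?thesis by blast
  qed
qed

lemma card_changes: "card {i. Suc i < length xs \<and> xs ! i \<noteq> xs ! Suc i} = length (remdups_adj xs) - 1"
proof (induction xs rule: remdups_adj.induct)
  case 1 then show ?case by simp
next
  case (2 x) then show ?case by simp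
next
  case (3 x y rest)
  define S where "S = {i. Suc i < length (y # rest) \<and> (y # rest) ! i \<noteq> (y # rest) ! Suc i}"
  have fin: "finite S" unfolding S_def by (rule finite_subset[of _ "{..<length (y#rest)}"]) auto
  have eq: "{i. Suc i < length (x # y # rest) \<and> (x # y # rest) ! i \<noteq> (x # y # rest) ! Suc i}
      = (if x \<noteq> y then {0} else {}) \<union> Suc ` S"
  proof (intro set_eqI iffI)
    fix i assume "i \<in> {i. Suc i < length (x # y # rest) \<and> (x # y # rest) ! i \<noteq> (x # y # rest) ! Suc i}"
    then show "i \<in> (if x \<noteq> y then {0} else {}) \<union> Suc ` S"
      unfolding S_def by (cases i) auto
  next
    fix i assume "i \<in> (if x \<noteq> y then {0} else {}) \<union> Suc ` S"
    then show "i \<in> {i. Suc i < length (x # y # rest) \<and> (x # y # rest) ! i \<noteq> (x # y # rest) ! Suc i}"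
      unfolding S_def by (auto split: if_splits)
  qed
  show ?case
  proof (cases "x = y")
    case True
    then have "card (Suc ` S) = card S" by (simp add: card_image)
    have "card {i. Suc i < length (x # y # rest) \<and> (x # y # rest) ! i \<noteq> (x # y # rest) ! Suc i} = card S"
      using eq True \<open>card (Suc ` S) = card S\<close> by simp
    also have "card S = length (remdups_adj (y # rest)) - 1" using 3(1)[OF True] True unfolding S_def by simp
    finally show ?thesis using True by simp
  next
    case False
    have "0 \<notin> Suc ` S" by auto
    then have "card ({0} \<union> Suc ` S) = Suc (card S)" using fin by (simp add: card_image)
    moreover have "length (remdups_adj (y # rest)) \<ge> 1" using remdups_adj_length_ge1[of "y # rest"] by simp
    moreover have "card S = length (remdups_adj (y # rest)) - 1" using 3(2)[OF False] unfolding S_def by simp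
    ultimately show ?thesis using False eq by simp
  qed
qed

lemma bends_alt: "bends es = length (remdups_adj (map horizontal es)) - 1"
proof -
  have "{i. Suc i < length es \<and> horizontal (es ! i) \<noteq> horizontal (es ! Suc i)}
     = {i. Suc i < length (map horizontal es) \<and> map horizontal es ! i \<noteq> map horizontal es ! Suc i}"
    by auto
  then show ?thesis unfolding bends_def using card_changes[of "map horizontal es"] by simp
qed

lemma remdups_adj_cong_Cons:
  "remdups_adj L1 = remdups_adj L2 \<Longrightarrow> remdups_adj (y # L1) = remdups_adj (y # L2)"
  by (simp add: remdups_adj_Cons)

lemma rfilter:
  assumes "\<forall>i<length xs. \<not> P (xs ! i) \<longrightarrow> (h ((a # xs) ! i) = h (xs ! i) \<or>
            (Suc i < length xs \<and> P (xs ! Suc i) \<and> h (xs ! Suc i) = h (xs ! i)))"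
  shows "remdups_adj (h a # map h (filter P xs)) = remdups_adj (h a # map h xs)"
  using assms
proof (induction xs arbitrary: a)
  case Nil
  then show ?case by simp
next
  case (Cons x xs)
  show ?case
  proof (cases "P x")
    case True
    have c: "\<forall>i<length xs. \<not> P (xs ! i) \<longrightarrow> (h ((x # xs) ! i) = h (xs ! i) \<or>
            (Suc i < length xs \<and> P (xs ! Suc i) \<and> h (xs ! Suc i) = h (xs ! i)))"
    proof (intro allI impI)
      fix i assume "i < length xs" "\<not> P (xs ! i)"
      then show "h ((x # xs) ! i) = h (xs ! i) \<or> (Suc i < length xs \<and> P (xs ! Suc i) \<and> h (xs ! Suc i) = h (xs ! i))"
        using Cons.prems[rule_format, of "Suc i"] by simp
    qed
    have "remdups_adj (h x # map h (filter P xs)) = remdups_adj (h x # map h xs)" using Cons.IH[OF c] .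
    from remdups_adj_cong_Cons[OF this, of "h a"] show ?thesis using True by simp
  next
    case False
    then have "h a = h x \<or> (xs \<noteq> [] \<and> P (xs ! 0) \<and> h (xs ! 0) = h x)"
      using Cons.prems[rule_format, of 0] by auto
    then show ?thesis
    proof
      assume hx: "h a = h x"
      have c: "\<forall>i<length xs. \<not> P (xs ! i) \<longrightarrow> (h ((a # xs) ! i) = h (xs ! i) \<or>
            (Suc i < length xs \<and> P (xs ! Suc i) \<and> h (xs ! Suc i) = h (xs ! i)))"
      proof (intro allI impI)
        fix i assume "i < length xs" "\<not> P (xs ! i)"
        then show "h ((a # xs) ! i) = h (xs ! i) \<or> (Suc i < length xs \<and> P (xs ! Suc i) \<and> h (xs ! Suc i) = h (xs ! i))"
          using Cons.prems[rule_format, of "Suc i"] hx by (cases i) auto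
      qed
      show ?thesis using Cons.IH[OF c] False hx by simp
    next
      assume f: "xs \<noteq> [] \<and> P (xs ! 0) \<and> h (xs ! 0) = h x"
      then obtain y zs where yz: "xs = y # zs" by (cases xs) auto
      have c: "\<forall>i<length xs. \<not> P (xs ! i) \<longrightarrow> (h ((a # xs) ! i) = h (xs ! i) \<or>
            (Suc i < length xs \<and> P (xs ! Suc i) \<and> h (xs ! Suc i) = h (xs ! i)))"
      proof (intro allI impI)
        fix i assume "i < length xs" "\<not> P (xs ! i)"
        then show "h ((a # xs) ! i) = h (xs ! i) \<or> (Suc i < length xs \<and> P (xs ! Suc i) \<and> h (xs ! Suc i) = h (xs ! i))"
          using Cons.prems[rule_format, of "Suc i"] f yz by (cases i) auto
      qed
      have "remdups_adj (h a # map h (filter P xs)) = remdups_adj (h a # map h xs)" using Cons.IH[OF c] .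
      moreover have "remdups_adj (h x # map h xs) = remdups_adj (map h xs)"
        using f yz by simp
      from remdups_adj_cong_Cons[OF this, of "h a"]
      have "remdups_adj (h a # map h (x # xs)) = remdups_adj (h a # map h xs)" by simp
      ultimately show ?thesis using False by simp
    qed
  qed
qed

lemma rfilter0:
  assumes "\<forall>i<length xs. \<not> P (xs ! i) \<longrightarrow> ((0 < i \<and> h (xs ! (i - 1)) = h (xs ! i)) \<or>
            (Suc i < length xs \<and> P (xs ! Suc i) \<and> h (xs ! Suc i) = h (xs ! i)))"
  shows "remdups_adj (map h (filter P xs)) = remdups_adj (map h xs)"
proof (cases xs)
  case Nil then show ?thesis by simp
next
  case (Cons x ys)
  show ?thesis
  proof (cases "P x")
    case True
    have c: "\<forall>i<length ys. \<not> P (ys ! i) \<longrightarrow> (h ((x # ys) ! i) = h (ys ! i) \<or>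
            (Suc i < length ys \<and> P (ys ! Suc i) \<and> h (ys ! Suc i) = h (ys ! i)))"
    proof (intro allI impI)
      fix i assume "i < length ys" "\<not> P (ys ! i)"
      then show "h ((x # ys) ! i) = h (ys ! i) \<or> (Suc i < length ys \<and> P (ys ! Suc i) \<and> h (ys ! Suc i) = h (ys ! i))"
        using assms[rule_format, of "Suc i"] Cons by simp
    qed
    show ?thesis using rfilter[OF c] True Cons by simp
  next
    case False
    then obtain y zs where yz: "ys = y # zs" "P y" "h y = h x"
      using assms[rule_format, of 0] Cons by (cases ys) auto
    have c: "\<forall>i<length zs. \<not> P (zs ! i) \<longrightarrow> (h ((y # zs) ! i) = h (zs ! i) \<or>
            (Suc i < length zs \<and> P (zs ! Suc i) \<and> h (zs ! Suc i) = h (zs ! i)))"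
    proof (intro allI impI)
      fix i assume "i < length zs" "\<not> P (zs ! i)"
      then show "h ((y # zs) ! i) = h (zs ! i) \<or> (Suc i < length zs \<and> P (zs ! Suc i) \<and> h (zs ! Suc i) = h (zs ! i))"
        using assms[rule_format, of "Suc (Suc i)"] Cons yz by (cases i) auto
    qed
    show ?thesis using rfilter[OF c] False Cons yz by simp
  qed
qed

lemma valid_steps: "valid ps \<Longrightarrow> Suc i < length ps \<Longrightarrow> adj (ps ! i) (ps ! Suc i)"
  by (simp add: valid_def)

lemma edges_subset: "e \<in> set (edges xs) \<Longrightarrow> e \<subseteq> set xs"
  by (induction xs rule: edges.induct) auto

lemma horizontal_pair: "horizontal {p, q} \<longleftrightarrow> snd p = snd q"
  by (auto simp: horizontal_def)

definition hint :: "gpoint list \<Rightarrow> nat \<Rightarrow> bool" where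
  "hint ps i \<longleftrightarrow> 0 < i \<and> Suc i < length ps \<and> snd (ps ! (i - 1)) = snd (ps ! i) \<and> snd (ps ! Suc i) = snd (ps ! i)"

definition badcols :: "gpoint list \<Rightarrow> int set" where
  "badcols ps = {fst (ps ! i) | i. i < length ps \<and> \<not> hint ps i}"

definition good :: "int \<Rightarrow> gpoint list \<Rightarrow> bool" where
  "good c ps \<longleftrightarrow> (\<forall>i<length ps. fst (ps ! i) = c + 1 \<longrightarrow> hint ps i)"

lemma good_iff: "good c ps \<longleftrightarrow> c + 1 \<notin> badcols ps"
  unfolding good_def badcols_def by auto

lemma hint_nbrs:
  assumes v: "valid ps" and h: "hint ps i"
  shows "{ps ! (i - 1), ps ! Suc i} = {(fst (ps ! i) - 1, snd (ps ! i)), (fst (ps ! i) + 1, snd (ps ! i))}"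
proof -
  have i: "0 < i" "Suc i < length ps" using h by (auto simp: hint_def)
  obtain p1 p2 where p: "ps ! (i - 1) = (p1, p2)" by fastforce
  obtain q1 q2 where q: "ps ! i = (q1, q2)" by fastforce
  obtain r1 r2 where r: "ps ! Suc i = (r1, r2)" by fastforce
  have "adj (ps ! (i - 1)) (ps ! Suc (i - 1))" using i by (intro valid_steps[OF v]) auto
  then have a1: "adj (p1, p2) (q1, q2)" using p q i by simp
  have a2: "adj (q1, q2) (r1, r2)" using valid_steps[OF v i(2)] q r by simp
  have s: "p2 = q2" "r2 = q2" using h p q r by (auto simp: hint_def)
  have "ps ! (i - 1) \<noteq> ps ! Suc i" using v i by (intro dneq) (auto simp: valid_def)
  then have ne: "(p1, p2) \<noteq> (r1, r2)" using p r by simp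
  have "p1 = q1 - 1 \<or> p1 = q1 + 1" using a1 s by (auto simp: adj_def)
  moreover have "r1 = q1 - 1 \<or> r1 = q1 + 1" using a2 s by (auto simp: adj_def)
  ultimately have "(p1 = q1 - 1 \<and> r1 = q1 + 1) \<or> (p1 = q1 + 1 \<and> r1 = q1 - 1)" using ne s by auto
  then show ?thesis using p q r s by auto
qed

definition colf :: "int \<Rightarrow> gpoint \<Rightarrow> gpoint" where
  "colf c p = (if fst p \<le> c then fst p else fst p - 1, snd p)"

definition Rc :: "int \<Rightarrow> gedge set" where
  "Rc c = {e. \<exists>y. e = {(c, y), (c + 1, y)}}"

lemma snd_colf[simp]: "snd (colf c p) = snd p" by (simp add: colf_def)

lemma horizontal_colf: "horizontal (colf c ` e) = horizontal e"
  by (simp add: horizontal_def)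

lemma colf_eq_iff_R:
  assumes "adj a b" shows "colf c a = colf c b \<longleftrightarrow> {a, b} \<in> Rc c"
proof -
  obtain a1 a2 b1 b2 where ab: "a = (a1, a2)" "b = (b1, b2)" by fastforce
  show ?thesis using assms unfolding ab Rc_def colf_def adj_def
    by (auto simp: doubleton_eq_iff)
qed

lemma colf_adj:
  assumes "adj a b" "colf c a \<noteq> colf c b" shows "adj (colf c a) (colf c b)"
proof -
  obtain a1 a2 b1 b2 where ab: "a = (a1, a2)" "b = (b1, b2)" by fastforce
  show ?thesis using assms unfolding ab colf_def adj_def by (auto split: if_splits)
qed

lemma edges_collapse:
  assumes "successively adj ps"
  shows "edges (remdups_adj (map (colf c) ps)) = map (\<lambda>e. colf c ` e) (filter (\<lambda>e. e \<notin> Rc c) (edges ps))"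
  using assms
proof (induction ps rule: edges.induct)
  case (1 a b xs)
  have ab: "adj a b" and rest: "successively adj (b # xs)" using "1.prems" by auto
  show ?case
  proof (cases "colf c a = colf c b")
    case True
    then have "{a, b} \<in> Rc c" using colf_eq_iff_R[OF ab] by simp
    then show ?thesis using True "1.IH"[OF rest] by simp
  next
    case False
    then have nR: "{a, b} \<notin> Rc c" using colf_eq_iff_R[OF ab] by simp
    obtain T where T: "remdups_adj (colf c b # map (colf c) xs) = colf c b # T"
      using remdups_adj_Cons_alt[of "colf c b" "map (colf c) xs"] by metis
    have "edges (remdups_adj (map (colf c) (a # b # xs))) = {colf c a, colf c b} # edges (remdups_adj (map (colf c) (b # xs)))"
      using False T by simp
    then show ?thesis using nR "1.IH"[OF rest] by simp
  qed
qed auto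

lemma distinct_collapse:
  assumes "distinct ps" "\<forall>p\<in>set ps. \<forall>q\<in>set ps. f p = f q \<longrightarrow> p = q \<or> {p, q} \<in> set (edges ps)"
  shows "distinct (remdups_adj (map f ps))"
  using assms
proof (induction ps)
  case Nil then show ?case by simp
next
  case (Cons a rest)
  show ?case
  proof (cases rest)
    case Nil then show ?thesis by simp
  next
    case (Cons b rest')
    have er: "set (edges (a # rest)) = insert {a, b} (set (edges rest))" using Cons by auto
    have anr: "a \<notin> set rest" using Cons.prems by auto
    have "\<forall>p\<in>set rest. \<forall>q\<in>set rest. f p = f q \<longrightarrow> p = q \<or> {p, q} \<in> set (edges rest)"
    proof (intro ballI impI)
      fix p q assume pq: "p \<in> set rest" "q \<in> set rest" "f p = f q"
      then have "p = q \<or> {p, q} \<in> set (edges (a # rest))" using Cons.prems by auto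
      moreover have "{p, q} \<noteq> {a, b}" using pq anr by (auto simp: doubleton_eq_iff)
      ultimately show "p = q \<or> {p, q} \<in> set (edges rest)" using er by auto
    qed
    then have IH: "distinct (remdups_adj (map f rest))"
      using Cons.IH Cons.prems by auto
    show ?thesis
    proof (cases "f a = f b")
      case True
      then have "remdups_adj (map f (a # rest)) = remdups_adj (map f rest)" using Cons by simp
      then show ?thesis using IH by simp
    next
      case False
      have "f a \<notin> f ` set rest"
      proof
        assume "f a \<in> f ` set rest"
        then obtain q where q: "q \<in> set rest" "f a = f q" by auto
        have "a \<noteq> q" using q Cons.prems by auto
        then have "{a, q} \<in> set (edges (a # rest))" using Cons.prems q by auto
        moreover have "a \<notin> set rest" using Cons.prems by auto
        ultimately have "{a, q} = {a, b}" using Cons edges_subset[of "{a, q}" rest] by auto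
        then have "q = b" using \<open>a \<noteq> q\<close> by (auto simp: doubleton_eq_iff)
        then show False using q False by simp
      qed
      then have "remdups_adj (map f (a # rest)) = f a # remdups_adj (map f rest)" using Cons False by simp
      then show ?thesis using IH \<open>f a \<notin> f ` set rest\<close> by simp
    qed
  qed
qed

lemma steps_collapse:
  assumes "successively adj ps" "\<And>a b. adj a b \<Longrightarrow> f a = f b \<or> adj (f a) (f b)"
  shows "successively adj (remdups_adj (map f ps))"
proof -
  have "successively (\<lambda>x y. x = y \<or> adj x y) (map f ps)"
    unfolding successively_map by (rule successively_mono[OF assms(1)]) (use assms(2) in blast)
  then have s: "successively (\<lambda>x y. x = y \<or> adj x y) (remdups_adj (map f ps))"
    by (rule successively_remdups_adjI)
  show ?thesis unfolding successively_conv_nth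
  proof (intro allI impI)
    fix i assume i: "Suc i < length (remdups_adj (map f ps))"
    then show "adj (remdups_adj (map f ps) ! i) (remdups_adj (map f ps) ! Suc i)"
      using successively_nth[OF s i] remdups_adj_adjacent[OF i] by auto
  qed
qed

definition okedge :: "int \<Rightarrow> gpoint \<Rightarrow> gpoint \<Rightarrow> bool" where
  "okedge c a b \<longleftrightarrow> adj a b \<and> {a, b} \<notin> Rc c \<and> (fst a = c + 1 \<longrightarrow> snd a = snd b) \<and> (fst b = c + 1 \<longrightarrow> snd a = snd b)"

lemma okedge_sym: "okedge c a b \<Longrightarrow> okedge c b a"
  unfolding okedge_def by (auto simp: adj_sym insert_commute)

lemma colf_eq_cases:
  assumes "colf c p = colf c q" "p \<noteq> q"
  shows "snd p = snd q \<and> ((fst p = c \<and> fst q = c + 1) \<or> (fst p = c + 1 \<and> fst q = c))"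
proof -
  obtain p1 p2 q1 q2 where pq: "p = (p1, p2)" "q = (q1, q2)" by fastforce
  show ?thesis using assms unfolding pq colf_def by (auto split: if_splits)
qed

lemma P1:
  assumes "a = (c, y)" "a' = (c + 1, y)" "okedge c a b" "okedge c a' b'" "colf c b = colf c b'"
  shows False
proof -
  obtain b1 b2 where b: "b = (b1, b2)" by fastforce
  obtain b1' b2' where b': "b' = (b1', b2')" by fastforce
  have "b2' = y" using assms(2,4) b' by (auto simp: okedge_def)
  moreover have "adj a' b'" using assms(4) by (simp add: okedge_def)
  then have "\<bar>c + 1 - b1'\<bar> + \<bar>y - b2'\<bar> = 1" using assms(2) b' by (simp add: adj_def)
  ultimately have "b1' = c \<or> b1' = c + 2" by auto
  moreover have "{a', b'} \<notin> Rc c" using assms(4) by (simp add: okedge_def)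
  ultimately have "b1' = c + 2" using assms(2) b' \<open>b2' = y\<close> unfolding Rc_def by (auto simp: insert_commute)
  then have "colf c b' = (c + 1, y)" using b' \<open>b2' = y\<close> by (simp add: colf_def)
  then have "b1 = c + 2" "b2 = y" using assms(5) b by (auto simp: colf_def split: if_splits)
  moreover have "adj a b" using assms(3) by (simp add: okedge_def)
  ultimately show False using assms(1) b by (simp add: adj_def)
qed

lemma P2:
  assumes "okedge c a b" "okedge c a' b'" "colf c a = colf c a'" "colf c b = colf c b'"
  shows "a = a'"
proof (rule ccontr)
  assume "a \<noteq> a'"
  from colf_eq_cases[OF assms(3) this]
  have "snd a = snd a' \<and> ((fst a = c \<and> fst a' = c + 1) \<or> (fst a = c + 1 \<and> fst a' = c))" .
  then show False
  proof (elim conjE disjE)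
    assume "snd a = snd a'" "fst a = c" "fst a' = c + 1"
    then show False using P1[of a c "snd a" a' b b'] assms by (metis prod.collapse)
  next
    assume "snd a = snd a'" "fst a = c + 1" "fst a' = c"
    then show False using P1[of a' c "snd a" a b' b] assms by (metis prod.collapse)
  qed
qed

lemma colf_inj_edge:
  assumes "okedge c a b" "okedge c a' b'" "colf c ` {a, b} = colf c ` {a', b'}"
  shows "{a, b} = {a', b'}"
proof -
  have "{colf c a, colf c b} = {colf c a', colf c b'}" using assms(3) by simp
  then have "(colf c a = colf c a' \<and> colf c b = colf c b') \<or> (colf c a = colf c b' \<and> colf c b = colf c a')"
    by (simp add: doubleton_eq_iff)
  then show ?thesis
  proof
    assume h: "colf c a = colf c a' \<and> colf c b = colf c b'"
    have "a = a'" using P2[OF assms(1,2)] h by blast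
    moreover have "b = b'" using P2[OF okedge_sym[OF assms(1)] okedge_sym[OF assms(2)]] h by blast
    ultimately show ?thesis by simp
  next
    assume h: "colf c a = colf c b' \<and> colf c b = colf c a'"
    have "a = b'" using P2[OF assms(1) okedge_sym[OF assms(2)]] h by blast
    moreover have "b = a'" using P2[OF okedge_sym[OF assms(1)] assms(2)] h by blast
    ultimately show ?thesis by auto
  qed
qed

lemma vc1:
  assumes v: "valid ps" and g: "good c ps" and i: "i < length ps" and p: "ps ! i = (c + 1, y)"
  shows "hint ps i \<and> {ps ! (i - 1), ps ! Suc i} = {(c, y), (c + 2, y)}"
proof -
  have h: "hint ps i" using g i p by (simp add: good_def)
  have "{ps ! (i - 1), ps ! Suc i} = {(c + 1 - 1, y), (c + 1 + 1, y)}" using hint_nbrs[OF v h] p by simp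
  then show ?thesis using h by (simp add: add.assoc)
qed

lemma N2:
  assumes v: "valid ps" and g: "good c ps" and y: "(c + 1, y) \<in> set ps"
  shows "{(c, y), (c + 1, y)} \<in> set (edges ps) \<and> {(c + 1, y), (c + 2, y)} \<in> set (edges ps)"
proof -
  obtain i where i: "i < length ps" "ps ! i = (c + 1, y)" using y by (auto simp: in_set_conv_nth)
  have h: "hint ps i" and nb: "{ps ! (i - 1), ps ! Suc i} = {(c, y), (c + 2, y)}" using vc1[OF v g i] by auto
  have i2: "0 < i" "Suc i < length ps" using h by (auto simp: hint_def)
  have e1: "{ps ! i, ps ! Suc i} \<in> set (edges ps)" using i2 unfolding set_edges by blast
  have "{ps ! (i - 1), ps ! Suc (i - 1)} \<in> set (edges ps)" using i2 unfolding set_edges by (intro CollectI exI[of _ "i - 1"]) auto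
  then have e0: "{ps ! (i - 1), ps ! i} \<in> set (edges ps)" using i2 by simp
  have "(ps ! (i - 1) = (c, y) \<and> ps ! Suc i = (c + 2, y)) \<or> (ps ! (i - 1) = (c + 2, y) \<and> ps ! Suc i = (c, y))"
    using nb by (simp add: doubleton_eq_iff)
  then show ?thesis
  proof
    assume "ps ! (i - 1) = (c, y) \<and> ps ! Suc i = (c + 2, y)"
    then show ?thesis using e0 e1 i by simp
  next
    assume "ps ! (i - 1) = (c + 2, y) \<and> ps ! Suc i = (c, y)"
    then show ?thesis using e0 e1 i by (simp add: insert_commute)
  qed
qed

lemma Rpath:
  assumes v: "valid ps" and g: "good c ps" and e: "e \<in> set (edges ps)" "e \<in> Rc c"
  shows "\<exists>y. e = {(c, y), (c + 1, y)} \<and> {(c + 1, y), (c + 2, y)} \<in> set (edges ps)"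
proof -
  obtain y where y: "e = {(c, y), (c + 1, y)}" using e(2) by (auto simp: Rc_def)
  then have "(c + 1, y) \<in> set ps" using edges_subset[OF e(1)] by auto
  then show ?thesis using N2[OF v g] y by blast
qed

lemma not_R_shift: "{(c + 1, y), (c + 2, y)} \<notin> Rc c"
  by (auto simp: Rc_def doubleton_eq_iff)

lemma okpath:
  assumes v: "valid ps" and g: "good c ps" and e: "e \<in> set (edges ps)" "e \<notin> Rc c"
  shows "\<exists>a b. e = {a, b} \<and> okedge c a b"
proof -
  obtain i where i: "Suc i < length ps" "e = {ps ! i, ps ! Suc i}" using e(1) unfolding set_edges by blast
  have "adj (ps ! i) (ps ! Suc i)" using valid_steps[OF v i(1)] .
  moreover have "fst (ps ! i) = c + 1 \<longrightarrow> snd (ps ! i) = snd (ps ! Suc i)"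
    using g i by (auto simp: good_def hint_def)
  moreover have "fst (ps ! Suc i) = c + 1 \<longrightarrow> snd (ps ! i) = snd (ps ! Suc i)"
    using g i by (auto simp: good_def hint_def)
  ultimately show ?thesis using i e(2) unfolding okedge_def by blast
qed

lemma NB:
  assumes v: "valid ps" and g: "good c ps"
  shows "\<forall>i<length (edges ps). \<not> (edges ps ! i \<notin> Rc c) \<longrightarrow>
           ((0 < i \<and> horizontal (edges ps ! (i - 1)) = horizontal (edges ps ! i)) \<or>
            (Suc i < length (edges ps) \<and> edges ps ! Suc i \<notin> Rc c \<and> horizontal (edges ps ! Suc i) = horizontal (edges ps ! i)))"
proof (intro allI impI)
  fix i assume i: "i < length (edges ps)" and R: "\<not> (edges ps ! i \<notin> Rc c)"
  have i1: "Suc i < length ps" using i by simp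
  have ei: "edges ps ! i = {ps ! i, ps ! Suc i}" using nth_edges[OF i1] .
  obtain y where y: "{ps ! i, ps ! Suc i} = {(c, y), (c + 1, y)}" using R ei by (auto simp: Rc_def)
  have hi: "horizontal (edges ps ! i)" using y ei by (simp add: horizontal_pair)
  have "(ps ! i = (c, y) \<and> ps ! Suc i = (c + 1, y)) \<or> (ps ! i = (c + 1, y) \<and> ps ! Suc i = (c, y))"
    using y by (simp add: doubleton_eq_iff)
  then show "(0 < i \<and> horizontal (edges ps ! (i - 1)) = horizontal (edges ps ! i)) \<or>
            (Suc i < length (edges ps) \<and> edges ps ! Suc i \<notin> Rc c \<and> horizontal (edges ps ! Suc i) = horizontal (edges ps ! i))"
  proof
    assume a: "ps ! i = (c, y) \<and> ps ! Suc i = (c + 1, y)"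
    from vc1[OF v g i1 conjunct2[OF a]]
    have h: "hint ps (Suc i)" and nb: "{ps ! i, ps ! Suc (Suc i)} = {(c, y), (c + 2, y)}" by auto
    have l: "Suc (Suc i) < length ps" using h by (simp add: hint_def)
    have "ps ! Suc (Suc i) = (c + 2, y)" using nb a by (auto simp: doubleton_eq_iff)
    then have "edges ps ! Suc i = {(c + 1, y), (c + 2, y)}" using nth_edges[OF l] a by simp
    moreover have "Suc i < length (edges ps)" using l by simp
    ultimately show ?thesis using hi not_R_shift[of c y] by (simp add: horizontal_pair)
  next
    assume a: "ps ! i = (c + 1, y) \<and> ps ! Suc i = (c, y)"
    from vc1[OF v g _ conjunct1[OF a]] i1
    have h: "hint ps i" and nb: "{ps ! (i - 1), ps ! Suc i} = {(c, y), (c + 2, y)}" by auto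
    have i0: "0 < i" using h by (simp add: hint_def)
    have "ps ! (i - 1) = (c + 2, y)" using nb a by (auto simp: doubleton_eq_iff)
    moreover have "edges ps ! (i - 1) = {ps ! (i - 1), ps ! Suc (i - 1)}" using i0 i1 by (intro nth_edges) auto
    ultimately have "edges ps ! (i - 1) = {(c + 2, y), (c + 1, y)}" using i0 a by simp
    then show ?thesis using i0 hi by (simp add: horizontal_pair)
  qed
qed

lemma collapse_path:
  assumes v: "valid ps" and g: "good c ps"
  defines "ps' \<equiv> remdups_adj (map (colf c) ps)"
  shows "valid ps'" "bends (edges ps') = bends (edges ps)"
    "set (edges ps') = (\<lambda>e. colf c ` e) ` (set (edges ps) - Rc c)"
    "set ps' = colf c ` set ps"
proof -
  have st: "successively adj ps" using v by (simp add: valid_def successively_conv_nth)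
  have E: "edges ps' = map (\<lambda>e. colf c ` e) (filter (\<lambda>e. e \<notin> Rc c) (edges ps))"
    unfolding ps'_def by (rule edges_collapse[OF st])
  show "set (edges ps') = (\<lambda>e. colf c ` e) ` (set (edges ps) - Rc c)" using E by auto
  show "set ps' = colf c ` set ps" unfolding ps'_def by simp
  have "bends (edges ps') = length (remdups_adj (map horizontal (filter (\<lambda>e. e \<notin> Rc c) (edges ps)))) - 1"
    unfolding bends_alt E by (simp add: horizontal_colf o_def)
  also have "\<dots> = bends (edges ps)"
    unfolding bends_alt by (subst rfilter0[OF NB[OF v g]]) simp
  finally show "bends (edges ps') = bends (edges ps)" .
  have "edges ps \<noteq> []" using v by (cases ps rule: edges.cases) (auto simp: valid_def)
  then obtain e0 where e0: "e0 \<in> set (edges ps)" by (cases "edges ps") auto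
  have "\<exists>e\<in>set (edges ps). e \<notin> Rc c"
  proof (cases "e0 \<in> Rc c")
    case True
    then show ?thesis using Rpath[OF v g e0 True] not_R_shift by blast
  qed (use e0 in blast)
  then have "filter (\<lambda>e. e \<notin> Rc c) (edges ps) \<noteq> []" by (simp add: filter_empty_conv)
  then have "length (edges ps') \<noteq> 0" using E by simp
  then have l: "2 \<le> length ps'" by simp
  have d: "distinct ps'" unfolding ps'_def
  proof (rule distinct_collapse)
    show "distinct ps" using v by (simp add: valid_def)
    show "\<forall>p\<in>set ps. \<forall>q\<in>set ps. colf c p = colf c q \<longrightarrow> p = q \<or> {p, q} \<in> set (edges ps)"
    proof (intro ballI impI)
      fix p q assume pq: "p \<in> set ps" "q \<in> set ps" "colf c p = colf c q"
      show "p = q \<or> {p, q} \<in> set (edges ps)"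
      proof (cases "p = q")
        case False
        from colf_eq_cases[OF pq(3) False]
        have "snd p = snd q \<and> (fst p = c \<and> fst q = c + 1 \<or> fst p = c + 1 \<and> fst q = c)" .
        then show ?thesis
        proof (elim conjE disjE)
          assume "snd p = snd q" "fst p = c" "fst q = c + 1"
          then have "p = (c, snd q)" "q = (c + 1, snd q)" by (auto simp: prod_eq_iff)
          then show ?thesis using N2[OF v g, of "snd q"] pq by auto
        next
          assume "snd p = snd q" "fst p = c + 1" "fst q = c"
          then have "q = (c, snd q)" "p = (c + 1, snd q)" by (auto simp: prod_eq_iff)
          then show ?thesis using N2[OF v g, of "snd q"] pq by (auto simp: insert_commute)
        qed
      qed simp
    qed
  qed
  have s: "successively adj ps'" unfolding ps'_def
    by (rule steps_collapse[OF st]) (use colf_adj in blast)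
  show "valid ps'" using l d s by (simp add: valid_def successively_conv_nth)
qed

definition IR :: "'a set \<Rightarrow> ('a \<Rightarrow> gpoint list) \<Rightarrow> ('a \<Rightarrow> gpoint list) \<Rightarrow> bool" where
  "IR V Q Q' \<longleftrightarrow> (\<forall>u\<in>V. \<forall>v\<in>V. (set (edges (Q' u)) \<inter> set (edges (Q' v)) \<noteq> {}) \<longleftrightarrow> (set (edges (Q u)) \<inter> set (edges (Q v)) \<noteq> {}))"

definition HP :: "'a set \<Rightarrow> ('a \<Rightarrow> gpoint list) \<Rightarrow> bool" where
  "HP V Q \<longleftrightarrow> helly_rep V (\<lambda>v. edges (Q v))"

lemma common_shift:
  assumes v: "valid ps" and g: "good c ps" and e: "e \<in> set (edges ps)" and y: "e = {(c, y), (c + 1, y)}"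
  shows "{(c + 1, y), (c + 2, y)} \<in> set (edges ps)"
proof -
  have "(c + 1, y) \<in> set ps" using edges_subset[OF e] y by auto
  then show ?thesis using N2[OF v g] by blast
qed

lemma collapse_family:
  assumes a: "\<forall>v\<in>V. valid (Q v) \<and> good c (Q v)"
  defines "Q' \<equiv> \<lambda>v. remdups_adj (map (colf c) (Q v))"
  shows "\<forall>v\<in>V. valid (Q' v) \<and> bends (edges (Q' v)) = bends (edges (Q v)) \<and> set (Q' v) = colf c ` set (Q v)"
    and "IR V Q Q'"
    and "HP V Q \<Longrightarrow> HP V Q'"
proof -
  show "\<forall>v\<in>V. valid (Q' v) \<and> bends (edges (Q' v)) = bends (edges (Q v)) \<and> set (Q' v) = colf c ` set (Q v)"
  proof
    fix v assume v: "v \<in> V"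
    then have "valid (Q v)" "good c (Q v)" using a by auto
    from collapse_path[OF this] show "valid (Q' v) \<and> bends (edges (Q' v)) = bends (edges (Q v)) \<and> set (Q' v) = colf c ` set (Q v)"
      unfolding Q'_def by blast
  qed
  have se: "\<And>v. v \<in> V \<Longrightarrow> set (edges (Q' v)) = (\<lambda>e. colf c ` e) ` (set (edges (Q v)) - Rc c)"
  proof -
    fix v assume v: "v \<in> V"
    then have "valid (Q v)" "good c (Q v)" using a by auto
    from collapse_path(3)[OF this] show "set (edges (Q' v)) = (\<lambda>e. colf c ` e) ` (set (edges (Q v)) - Rc c)"
      unfolding Q'_def by blast
  qed
  have lift: "\<And>e v. v \<in> V \<Longrightarrow> e \<in> set (edges (Q v)) \<Longrightarrow> \<exists>e'. e' \<in> set (edges (Q v)) \<and> e' \<notin> Rc c \<and>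
        (\<forall>w\<in>V. e \<in> set (edges (Q w)) \<longrightarrow> e' \<in> set (edges (Q w)))"
  proof -
    fix e v assume v: "v \<in> V" and e: "e \<in> set (edges (Q v))"
    show "\<exists>e'. e' \<in> set (edges (Q v)) \<and> e' \<notin> Rc c \<and> (\<forall>w\<in>V. e \<in> set (edges (Q w)) \<longrightarrow> e' \<in> set (edges (Q w)))"
    proof (cases "e \<in> Rc c")
      case True
      then obtain y where y: "e = {(c, y), (c + 1, y)}" by (auto simp: Rc_def)
      have "\<forall>w\<in>V. e \<in> set (edges (Q w)) \<longrightarrow> {(c + 1, y), (c + 2, y)} \<in> set (edges (Q w))"
      proof (intro ballI impI)
        fix w assume "w \<in> V" "e \<in> set (edges (Q w))"
        then show "{(c + 1, y), (c + 2, y)} \<in> set (edges (Q w))"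
          using common_shift[OF _ _ _ y] a by blast
      qed
      then show ?thesis using v e not_R_shift[of c y]
        by (intro exI[of _ "{(c + 1, y), (c + 2, y)}"]) blast
    qed (use e in blast)
  qed
  have iff: "\<And>u v. u \<in> V \<Longrightarrow> v \<in> V \<Longrightarrow> (set (edges (Q' u)) \<inter> set (edges (Q' v)) \<noteq> {}) \<longleftrightarrow> (set (edges (Q u)) \<inter> set (edges (Q v)) \<noteq> {})"
  proof
    fix u v assume u: "u \<in> V" and v: "v \<in> V"
    assume "set (edges (Q' u)) \<inter> set (edges (Q' v)) \<noteq> {}"
    then obtain e1 e2 where e1: "e1 \<in> set (edges (Q u))" "e1 \<notin> Rc c" and e2: "e2 \<in> set (edges (Q v))" "e2 \<notin> Rc c"
      and eq: "colf c ` e1 = colf c ` e2" using se[OF u] se[OF v] by auto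
    obtain a1 b1 where ab1: "e1 = {a1, b1}" "okedge c a1 b1" using okpath[OF _ _ e1] a u by blast
    obtain a2 b2 where ab2: "e2 = {a2, b2}" "okedge c a2 b2" using okpath[OF _ _ e2] a v by blast
    have "e1 = e2" using colf_inj_edge[OF ab1(2) ab2(2)] eq ab1(1) ab2(1) by simp
    then show "set (edges (Q u)) \<inter> set (edges (Q v)) \<noteq> {}" using e1 e2 by auto
  next
    fix u v assume u: "u \<in> V" and v: "v \<in> V"
    assume "set (edges (Q u)) \<inter> set (edges (Q v)) \<noteq> {}"
    then obtain e where e: "e \<in> set (edges (Q u))" "e \<in> set (edges (Q v))" by auto
    obtain e' where e': "e' \<in> set (edges (Q u))" "e' \<notin> Rc c" "\<forall>w\<in>V. e \<in> set (edges (Q w)) \<longrightarrow> e' \<in> set (edges (Q w))"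
      using lift[OF u e(1)] by blast
    have "colf c ` e' \<in> set (edges (Q' u))" "colf c ` e' \<in> set (edges (Q' v))"
      using se[OF u] se[OF v] e' e u v by auto
    then show "set (edges (Q' u)) \<inter> set (edges (Q' v)) \<noteq> {}" by auto
  qed
  then show "IR V Q Q'" unfolding IR_def by blast
  assume h: "HP V Q"
  show "HP V Q'" unfolding HP_def helly_rep_def
  proof (intro allI impI)
    fix S assume S: "S \<subseteq> V" and pw: "\<forall>u\<in>S. \<forall>v\<in>S. set (edges (Q' u)) \<inter> set (edges (Q' v)) \<noteq> {}"
    then have "\<forall>u\<in>S. \<forall>v\<in>S. set (edges (Q u)) \<inter> set (edges (Q v)) \<noteq> {}" using iff by blast
    then obtain e where e: "\<forall>v\<in>S. e \<in> set (edges (Q v))" using h S unfolding HP_def helly_rep_def by blast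
    show "\<exists>e. \<forall>v\<in>S. e \<in> set (edges (Q' v))"
    proof (cases "S = {}")
      case False
      then obtain u where u: "u \<in> S" by auto
      obtain e' where e': "e' \<notin> Rc c" "\<forall>w\<in>V. e \<in> set (edges (Q w)) \<longrightarrow> e' \<in> set (edges (Q w))"
        using lift[of u e] u S e by blast
      have "\<forall>v\<in>S. colf c ` e' \<in> set (edges (Q' v))"
      proof
        fix v assume v: "v \<in> S"
        then have "e' \<in> set (edges (Q v))" using e' e S by blast
        then show "colf c ` e' \<in> set (edges (Q' v))" using se[of v] v S e'(1) by blast
      qed
      then show ?thesis by blast
    qed simp
  qed
qed

lemma walk:
  assumes v: "valid ps"
  defines "T \<equiv> {0, length ps - 1} \<union> Suc ` {i. Suc i < length (edges ps) \<and> horizontal (edges ps ! i) \<noteq> horizontal (edges ps ! Suc i)}"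
  shows "i < length ps \<Longrightarrow> \<not> hint ps i \<Longrightarrow> \<exists>j\<in>T. fst (ps ! j) = fst (ps ! i)"
proof (induction "length ps - i" arbitrary: i rule: less_induct)
  case less
  show ?case
  proof (cases "i = 0 \<or> i = length ps - 1")
    case True
    then have "i \<in> T" unfolding T_def by auto
    then show ?thesis by blast
  next
    case False
    then have i: "0 < i" "Suc i < length ps" using less.prems by auto
    have "Suc (i - 1) < length ps" using i by simp
    from nth_edges[OF this] have e1: "edges ps ! (i - 1) = {ps ! (i - 1), ps ! i}" using i by simp
    have e2: "edges ps ! i = {ps ! i, ps ! Suc i}" using nth_edges[of i ps] i by simp
    show ?thesis
    proof (cases "horizontal (edges ps ! (i - 1)) \<noteq> horizontal (edges ps ! Suc (i - 1))")
      case True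
      moreover have "Suc (i - 1) < length (edges ps)" using i by simp
      ultimately have "i - 1 \<in> {i. Suc i < length (edges ps) \<and> horizontal (edges ps ! i) \<noteq> horizontal (edges ps ! Suc i)}"
        by blast
      then have "Suc (i - 1) \<in> T" unfolding T_def by blast
      then show ?thesis using i by auto
    next
      case False
      then have "(snd (ps ! (i - 1)) = snd (ps ! i)) = (snd (ps ! i) = snd (ps ! Suc i))"
        using e1 e2 i by (simp add: horizontal_pair)
      then have ns: "snd (ps ! i) \<noteq> snd (ps ! Suc i)" using less.prems(2) i by (auto simp: hint_def)
      have "adj (ps ! i) (ps ! Suc i)" using valid_steps[OF v i(2)] .
      then have fx: "fst (ps ! Suc i) = fst (ps ! i)" using ns by (auto simp: adj_def)
      have nh: "\<not> hint ps (Suc i)" using ns by (auto simp: hint_def)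
      have lt: "length ps - Suc i < length ps - i" using i by simp
      obtain j where "j \<in> T" "fst (ps ! j) = fst (ps ! Suc i)"
        using less.hyps[OF lt i(2) nh] by blast
      then show ?thesis using fx by auto
    qed
  qed
qed

lemma badcols_card:
  assumes v: "valid ps"
  shows "finite (badcols ps) \<and> card (badcols ps) \<le> bends (edges ps) + 2"
proof -
  define BS where "BS = {i. Suc i < length (edges ps) \<and> horizontal (edges ps ! i) \<noteq> horizontal (edges ps ! Suc i)}"
  define T where "T = {0, length ps - 1} \<union> Suc ` BS"
  have finBS: "finite BS" unfolding BS_def by (rule finite_subset[of _ "{..<length (edges ps)}"]) auto
  have finT: "finite T" unfolding T_def using finBS by auto
  have "card T \<le> card {0, length ps - 1} + card (Suc ` BS)" unfolding T_def by (rule card_Un_le)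
  also have "\<dots> \<le> 2 + card BS"
  proof -
    have "card {0, length ps - 1} \<le> 2" by (cases "0 = length ps - 1") auto
    then show ?thesis using card_image_le[OF finBS, of Suc] by linarith
  qed
  finally have cT: "card T \<le> bends (edges ps) + 2" unfolding bends_def BS_def by simp
  have sub: "badcols ps \<subseteq> (\<lambda>j. fst (ps ! j)) ` T"
  proof
    fix x assume "x \<in> badcols ps"
    then obtain i where i: "i < length ps" "\<not> hint ps i" "x = fst (ps ! i)" unfolding badcols_def by blast
    then obtain j where j: "j \<in> T" "fst (ps ! j) = fst (ps ! i)" using walk[OF v i(1,2)] unfolding T_def BS_def by blast
    from imageI[OF j(1), of "\<lambda>j. fst (ps ! j)"] show "x \<in> (\<lambda>j. fst (ps ! j)) ` T" using i j by simp
  qed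
  have fin: "finite (badcols ps)" using finite_subset[OF sub] finT by blast
  have "card (badcols ps) \<le> card ((\<lambda>j. fst (ps ! j)) ` T)" using card_mono[OF _ sub] finT by blast
  also have "\<dots> \<le> card T" using card_image_le[OF finT] .
  finally show ?thesis using fin cT by simp
qed

definition R0 :: "nat \<Rightarrow> 'a set \<Rightarrow> ('a \<Rightarrow> gpoint list) \<Rightarrow> bool" where
  "R0 k V Q \<longleftrightarrow> (\<forall>v\<in>V. valid (Q v) \<and> bends (edges (Q v)) \<le> k)"

lemma IR_refl: "IR V Q Q" by (simp add: IR_def)
lemma IR_trans: "IR V Q Q1 \<Longrightarrow> IR V Q1 Q2 \<Longrightarrow> IR V Q Q2" by (simp add: IR_def)

lemma badcols_total:
  assumes fin: "finite V" and r: "R0 k V Q"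
  shows "finite (\<Union>v\<in>V. badcols (Q v)) \<and> card (\<Union>v\<in>V. badcols (Q v)) \<le> card V * (k + 2)"
proof -
  have b: "\<And>v. v \<in> V \<Longrightarrow> finite (badcols (Q v)) \<and> card (badcols (Q v)) \<le> k + 2"
    using badcols_card r unfolding R0_def by fastforce
  have "card (\<Union>v\<in>V. badcols (Q v)) \<le> (\<Sum>v\<in>V. card (badcols (Q v)))" using card_UN_le[OF fin] .
  also have "\<dots> \<le> (\<Sum>v\<in>V. k + 2)" using b by (intro sum_mono) auto
  also have "\<dots> = card V * (k + 2)" by simp
  finally show ?thesis using fin b by auto
qed

lemma compress_cols:
  fixes Yp :: "int \<Rightarrow> bool" and Q :: "'a \<Rightarrow> gpoint list"
  assumes fin: "finite V" and r: "R0 k V Q" and pts: "\<forall>v\<in>V. \<forall>p\<in>set (Q v). a \<le> fst p \<and> fst p \<le> b \<and> Yp (snd p)"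
  shows "\<exists>Q'. R0 k V Q' \<and> IR V Q Q' \<and> (HP V Q \<longrightarrow> HP V Q') \<and>
     (\<forall>v\<in>V. \<forall>p\<in>set (Q' v). a \<le> fst p \<and> fst p \<le> a + int (card V * (k + 2)) \<and> Yp (snd p))"
  using r pts
proof (induction "nat (b - a)" arbitrary: b Q rule: less_induct)
  case less
  show ?case
  proof (cases "b \<le> a + int (card V * (k + 2))")
    case True
    then show ?thesis using less.prems IR_refl[of V Q] by (intro exI[of _ Q]) fastforce
  next
    case False
    define B where "B = (\<Union>v\<in>V. badcols (Q v))"
    have B: "finite B" "card B \<le> card V * (k + 2)" using badcols_total[OF fin less.prems(1)] unfolding B_def by auto
    have "\<not> {a + 1..b} \<subseteq> B"
    proof
      assume "{a + 1..b} \<subseteq> B"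
      then have "card {a + 1..b} \<le> card B" using card_mono[OF B(1)] by blast
      moreover have "card {a + 1..b} = nat (b - a)" by simp
      ultimately show False using B(2) False by linarith
    qed
    then obtain x where "x \<in> {a + 1..b}" "x \<notin> B" by blast
    then have x: "a + 1 \<le> x" "x \<le> b" "x \<notin> B" by auto
    define c where "c = x - 1"
    have g: "\<forall>v\<in>V. valid (Q v) \<and> good c (Q v)"
      using less.prems(1) x(3) unfolding R0_def B_def c_def by (auto simp: good_iff)
    define Q1 where "Q1 = (\<lambda>v. remdups_adj (map (colf c) (Q v)))"
    note cf0 = collapse_family[OF g]
    have cf1: "\<forall>v\<in>V. valid (Q1 v) \<and> bends (edges (Q1 v)) = bends (edges (Q v)) \<and> set (Q1 v) = colf c ` set (Q v)"
      unfolding Q1_def by (rule cf0(1))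
    have cf2: "IR V Q Q1" unfolding Q1_def by (rule cf0(2))
    have cf3: "HP V Q \<Longrightarrow> HP V Q1" unfolding Q1_def by (rule cf0(3))
    have r1: "R0 k V Q1" using cf1 less.prems(1) unfolding R0_def by auto
    have p1: "\<forall>v\<in>V. \<forall>p\<in>set (Q1 v). a \<le> fst p \<and> fst p \<le> b - 1 \<and> Yp (snd p)"
    proof (intro ballI)
      fix v p assume v: "v \<in> V" and p: "p \<in> set (Q1 v)"
      then obtain q where q: "q \<in> set (Q v)" "p = colf c q" using cf1 by auto
      have "a \<le> fst q \<and> fst q \<le> b \<and> Yp (snd q)" using less.prems(2) v q(1) by blast
      then show "a \<le> fst p \<and> fst p \<le> b - 1 \<and> Yp (snd p)" using q(2) x unfolding colf_def c_def by auto
    qed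
    have "a < b" using False by (smt (verit) of_nat_0_le_iff)
    then have lt: "nat (b - 1 - a) < nat (b - a)" by auto
    obtain Q' where Q': "R0 k V Q'" "IR V Q1 Q'" "HP V Q1 \<longrightarrow> HP V Q'"
      "\<forall>v\<in>V. \<forall>p\<in>set (Q' v). a \<le> fst p \<and> fst p \<le> a + int (card V * (k + 2)) \<and> Yp (snd p)"
      using less.hyps[OF lt r1 p1] by blast
    show ?thesis using Q' IR_trans[OF cf2 Q'(2)] cf3 by blast
  qed
qed

definition sw :: "gpoint \<Rightarrow> gpoint" where "sw p = (snd p, fst p)"

lemma sw_sw[simp]: "sw (sw p) = p" by (simp add: sw_def)
lemma inj_sw: "inj sw" by (metis injI sw_sw)
lemma adj_sw[simp]: "adj (sw p) (sw q) = adj p q" by (simp add: sw_def adj_def add.commute)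
lemma image_sw_sw[simp]: "sw ` sw ` e = e" by (simp add: image_image)
lemma inj_image_sw: "inj (image sw)" by (metis injI image_sw_sw)

lemma edges_sw: "edges (map sw ps) = map (image sw) (edges ps)"
  by (induction ps rule: edges.induct) auto

lemma valid_sw: "valid ps \<Longrightarrow> valid (map sw ps)"
  unfolding valid_def using inj_sw by (auto simp: distinct_map inj_on_def)

lemma horizontal_sw: "adj p q \<Longrightarrow> horizontal (sw ` {p, q}) = (\<not> horizontal {p, q})"
  by (auto simp: horizontal_pair sw_def adj_def)

lemma bends_sw: assumes v: "valid ps" shows "bends (edges (map sw ps)) = bends (edges ps)"
proof -
  have h: "\<And>i. i < length (edges ps) \<Longrightarrow> horizontal (sw ` (edges ps ! i)) = (\<not> horizontal (edges ps ! i))"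
  proof -
    fix i assume "i < length (edges ps)"
    then have i: "Suc i < length ps" by simp
    show "horizontal (sw ` (edges ps ! i)) = (\<not> horizontal (edges ps ! i))"
      using nth_edges[OF i] horizontal_sw[OF valid_steps[OF v i]] by simp
  qed
  have "{i. Suc i < length (edges (map sw ps)) \<and> horizontal (edges (map sw ps) ! i) \<noteq> horizontal (edges (map sw ps) ! Suc i)}
      = {i. Suc i < length (edges ps) \<and> horizontal (edges ps ! i) \<noteq> horizontal (edges ps ! Suc i)}"
  proof (intro Collect_cong iffI)
    fix i assume a: "Suc i < length (edges (map sw ps)) \<and> horizontal (edges (map sw ps) ! i) \<noteq> horizontal (edges (map sw ps) ! Suc i)"
    then have l: "Suc i < length (edges ps)" by (simp add: edges_sw)
    then show "Suc i < length (edges ps) \<and> horizontal (edges ps ! i) \<noteq> horizontal (edges ps ! Suc i)"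
      using a h[of i] h[of "Suc i"] by (simp add: edges_sw)
  next
    fix i assume a: "Suc i < length (edges ps) \<and> horizontal (edges ps ! i) \<noteq> horizontal (edges ps ! Suc i)"
    then show "Suc i < length (edges (map sw ps)) \<and> horizontal (edges (map sw ps) ! i) \<noteq> horizontal (edges (map sw ps) ! Suc i)"
      using h[of i] h[of "Suc i"] by (simp add: edges_sw)
  qed
  then show ?thesis unfolding bends_def by simp
qed

lemma swap_family:
  assumes r: "R0 k V Q"
  defines "Q' \<equiv> \<lambda>v. map sw (Q v)"
  shows "R0 k V Q'" "IR V Q Q'" "HP V Q \<Longrightarrow> HP V Q'" "\<forall>v. set (Q' v) = sw ` set (Q v)"
proof -
  show "R0 k V Q'" using r valid_sw bends_sw unfolding R0_def Q'_def by auto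
  have se: "\<And>v. set (edges (Q' v)) = image sw ` set (edges (Q v))" unfolding Q'_def by (simp add: edges_sw)
  have ii: "\<And>A B. image sw ` A \<inter> image sw ` B = image sw ` (A \<inter> B)"
    using inj_image_sw by (simp add: image_Int)
  show "IR V Q Q'" unfolding IR_def se ii by simp
  show "\<forall>v. set (Q' v) = sw ` set (Q v)" unfolding Q'_def by simp
  assume h: "HP V Q"
  show "HP V Q'" unfolding HP_def helly_rep_def
  proof (intro allI impI)
    fix S assume S: "S \<subseteq> V" and pw: "\<forall>u\<in>S. \<forall>v\<in>S. set (edges (Q' u)) \<inter> set (edges (Q' v)) \<noteq> {}"
    then have "\<forall>u\<in>S. \<forall>v\<in>S. set (edges (Q u)) \<inter> set (edges (Q v)) \<noteq> {}" unfolding se ii by simp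
    then obtain e where e: "\<forall>v\<in>S. e \<in> set (edges (Q v))" using h S unfolding HP_def helly_rep_def by blast
    then have "\<forall>v\<in>S. sw ` e \<in> set (edges (Q' v))" unfolding se by blast
    then show "\<exists>e. \<forall>v\<in>S. e \<in> set (edges (Q' v))" by blast
  qed
qed

lemma bounds_exist:
  fixes Q :: "'a \<Rightarrow> gpoint list"
  assumes "finite V"
  shows "\<exists>a b. \<forall>v\<in>V. \<forall>p\<in>set (Q v). a \<le> fst p \<and> fst p \<le> b"
proof -
  define X where "X = insert 0 (fst ` (\<Union>v\<in>V. set (Q v)))"
  have fX: "finite X" unfolding X_def using assms by auto
  have "\<forall>v\<in>V. \<forall>p\<in>set (Q v). Min X \<le> fst p \<and> fst p \<le> Max X"
    using fX unfolding X_def by (auto intro!: Min_le Max_ge)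
  then show ?thesis by blast
qed

lemma main:
  assumes fin: "finite V" and r: "R0 k V Q"
  shows "\<exists>Q'. R0 k V Q' \<and> IR V Q Q' \<and> (HP V Q \<longrightarrow> HP V Q') \<and>
    (\<exists>x0 y0. \<forall>v\<in>V. \<forall>p\<in>set (Q' v). x0 \<le> fst p \<and> fst p \<le> x0 + int (card V * (k + 2)) \<and>
        y0 \<le> snd p \<and> snd p \<le> y0 + int (card V * (k + 2)))"
proof -
  define N where "N = int (card V * (k + 2))"
  obtain a b where ab: "\<forall>v\<in>V. \<forall>p\<in>set (Q v). a \<le> fst p \<and> fst p \<le> b" using bounds_exist[OF fin] by blast
  obtain Q1 where Q1: "R0 k V Q1" "IR V Q Q1" "HP V Q \<longrightarrow> HP V Q1"
    "\<forall>v\<in>V. \<forall>p\<in>set (Q1 v). a \<le> fst p \<and> fst p \<le> a + N \<and> True"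
    using compress_cols[OF fin r, of a b "\<lambda>_. True"] ab unfolding N_def by blast
  define Q2 where "Q2 = (\<lambda>v. map sw (Q1 v))"
  note s2' = swap_family[OF Q1(1)]
  have s2: "R0 k V Q2" "IR V Q1 Q2" "HP V Q1 \<Longrightarrow> HP V Q2" "\<forall>v. set (Q2 v) = sw ` set (Q1 v)"
    unfolding Q2_def using s2' by auto
  have p2: "\<forall>v\<in>V. \<forall>p\<in>set (Q2 v). a \<le> snd p \<and> snd p \<le> a + N"
    using Q1(4) s2(4) by (auto simp: sw_def)
  obtain a2 b2 where ab2: "\<forall>v\<in>V. \<forall>p\<in>set (Q2 v). a2 \<le> fst p \<and> fst p \<le> b2" using bounds_exist[OF fin] by blast
  obtain Q3 where Q3: "R0 k V Q3" "IR V Q2 Q3" "HP V Q2 \<longrightarrow> HP V Q3"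
    "\<forall>v\<in>V. \<forall>p\<in>set (Q3 v). a2 \<le> fst p \<and> fst p \<le> a2 + N \<and> (a \<le> snd p \<and> snd p \<le> a + N)"
    using compress_cols[OF fin s2(1), of a2 b2 "\<lambda>y. a \<le> y \<and> y \<le> a + N"] ab2 p2 unfolding N_def by blast
  define Q4 where "Q4 = (\<lambda>v. map sw (Q3 v))"
  note s4' = swap_family[OF Q3(1)]
  have s4: "R0 k V Q4" "IR V Q3 Q4" "HP V Q3 \<Longrightarrow> HP V Q4" "\<forall>v. set (Q4 v) = sw ` set (Q3 v)"
    unfolding Q4_def using s4' by auto
  have p4: "\<forall>v\<in>V. \<forall>p\<in>set (Q4 v). a \<le> fst p \<and> fst p \<le> a + N \<and> a2 \<le> snd p \<and> snd p \<le> a2 + N"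
    using Q3(4) s4(4) by (auto simp: sw_def)
  have "IR V Q Q4" using IR_trans[OF IR_trans[OF IR_trans[OF Q1(2) s2(2)] Q3(2)] s4(2)] .
  moreover have "HP V Q \<longrightarrow> HP V Q4" using Q1(3) s2(3) Q3(3) s4(3) by blast
  ultimately show ?thesis using s4(1) p4 unfolding N_def by blast
qed

lemma helly_cong: assumes eq: "\<And>v. v \<in> V \<Longrightarrow> P v = P' v" and h: "helly_rep V P" shows "helly_rep V P'"
  unfolding helly_rep_def
proof (intro allI impI)
  fix S assume S: "S \<subseteq> V" and pw: "\<forall>u\<in>S. \<forall>v\<in>S. set (P' u) \<inter> set (P' v) \<noteq> {}"
  have eqS: "\<And>v. v \<in> S \<Longrightarrow> P v = P' v" using eq S by blast
  have "\<forall>u\<in>S. \<forall>v\<in>S. set (P u) \<inter> set (P v) \<noteq> {}"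
  proof (intro ballI)
    fix u v assume "u \<in> S" "v \<in> S"
    then show "set (P u) \<inter> set (P v) \<noteq> {}" using pw eqS[of u] eqS[of v] by simp
  qed
  then obtain e where e: "\<forall>v\<in>S. e \<in> set (P v)" using h S unfolding helly_rep_def by blast
  have "\<forall>v\<in>S. e \<in> set (P' v)"
  proof
    fix v assume v: "v \<in> S"
    then have "e \<in> set (P v)" using e by blast
    then show "e \<in> set (P' v)" using eqS[OF v] by simp
  qed
  then show "\<exists>e. \<forall>v\<in>S. e \<in> set (P' v)" by blast
qed

lemma extractQ:
  assumes "Bk_EPG_rep k V E P"
  shows "\<exists>Q. R0 k V Q \<and> (\<forall>v\<in>V. edges (Q v) = P v)"
proof -
  define Q where "Q = (\<lambda>v. SOME ps. valid ps \<and> edges ps = P v)"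
  have "\<forall>v\<in>V. valid (Q v) \<and> edges (Q v) = P v"
  proof
    fix v assume "v \<in> V"
    then have "grid_path (P v)" using assms by (simp add: Bk_EPG_rep_def EPG_rep_def)
    from someI_ex[OF grid_path_valid[OF this]] show "valid (Q v) \<and> edges (Q v) = P v" unfolding Q_def .
  qed
  moreover have "\<forall>v\<in>V. bends (P v) \<le> k" using assms unfolding Bk_EPG_rep_def by blast
  ultimately have "R0 k V Q" unfolding R0_def by simp
  with \<open>\<forall>v\<in>V. valid (Q v) \<and> edges (Q v) = P v\<close> show ?thesis by blast
qed

lemma rebuild:
  assumes "Bk_EPG_rep k V E P" "\<forall>v\<in>V. edges (Q v) = P v" "R0 k V Q'" "IR V Q Q'"
  shows "Bk_EPG_rep k V E (\<lambda>v. edges (Q' v))"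
  unfolding Bk_EPG_rep_def EPG_rep_def
proof (intro conjI ballI impI)
  fix v assume v: "v \<in> V"
  show "grid_path (edges (Q' v))" using assms(3) v valid_grid_path unfolding R0_def by blast
  show "bends (edges (Q' v)) \<le> k" using assms(3) v unfolding R0_def by blast
next
  fix u v assume u: "u \<in> V" and v: "v \<in> V" and uv: "u \<noteq> v"
  have "E u v = (set (P u) \<inter> set (P v) \<noteq> {})" using assms(1) u v uv unfolding Bk_EPG_rep_def EPG_rep_def by blast
  also have "\<dots> = (set (edges (Q u)) \<inter> set (edges (Q v)) \<noteq> {})" using assms(2) u v by simp
  also have "\<dots> = (set (edges (Q' u)) \<inter> set (edges (Q' v)) \<noteq> {})" using assms(4) u v unfolding IR_def by blast
  finally show "E u v = (set (edges (Q' u)) \<inter> set (edges (Q' v)) \<noteq> {})" .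
qed

theorem lemma3p4:
  fixes V :: "'a set" and E :: "'a \<Rightarrow> 'a \<Rightarrow> bool" and n k :: nat
  assumes "simple_graph V E" and "card V = n"
  shows "((\<exists>P. Bk_EPG_rep k V E P) \<longrightarrow>
            (\<exists>P. Bk_EPG_rep k V E P \<and> on_grid_at_most V P (4 * n * (k + 1)))) \<and>
         ((\<exists>P. Bk_EPG_rep k V E P \<and> helly_rep V P) \<longrightarrow>
            (\<exists>P. Bk_EPG_rep k V E P \<and> helly_rep V P \<and> on_grid_at_most V P (4 * n * (k + 1))))"
proof -
  have fin: "finite V" using assms(1) by (simp add: simple_graph_def)
  have key: "\<exists>P'. Bk_EPG_rep k V E P' \<and> (helly_rep V P \<longrightarrow> helly_rep V P') \<and> on_grid_at_most V P' (4 * n * (k + 1))"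
    if P: "Bk_EPG_rep k V E P" for P
  proof -
    obtain Q where Q: "R0 k V Q" "\<forall>v\<in>V. edges (Q v) = P v" using extractQ[OF P] by blast
    obtain Q' x0 y0 where Q': "R0 k V Q'" "IR V Q Q'" "HP V Q \<longrightarrow> HP V Q'"
      and pts: "\<forall>v\<in>V. \<forall>p\<in>set (Q' v). x0 \<le> fst p \<and> fst p \<le> x0 + int (card V * (k + 2)) \<and>
        y0 \<le> snd p \<and> snd p \<le> y0 + int (card V * (k + 2))"
      using main[OF fin Q(1)] by blast
    define P' where "P' = (\<lambda>v. edges (Q' v))"
    have b: "Bk_EPG_rep k V E P'" unfolding P'_def by (rule rebuild[OF P Q(2) Q'(1,2)])
    have h: "helly_rep V P \<longrightarrow> helly_rep V P'"
    proof
      assume "helly_rep V P"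
      then have "HP V Q" unfolding HP_def by (rule helly_cong[rotated]) (use Q(2) in simp)
      then show "helly_rep V P'" using Q'(3) unfolding HP_def P'_def by simp
    qed
    have g: "on_grid_at_most V P' (4 * n * (k + 1))"
    proof (cases "V = {}")
      case True
      then show ?thesis unfolding on_grid_at_most_def on_grid_def by auto
    next
      case False
      then have n1: "1 \<le> n" using fin assms(2) by (metis card_0_eq less_one not_le)
      define M where "M = card V * (k + 2) + 1"
      have e1: "n * (k + 2) + n * (3 * k + 2) = 4 * n * (k + 1)" by (simp add: algebra_simps)
      have "0 < n * (3 * k + 2)" using n1 by simp
      then have M: "M \<le> 4 * n * (k + 1)" unfolding M_def assms(2) using e1 by linarith
      have "\<forall>v\<in>V. \<forall>e\<in>set (P' v). \<forall>p\<in>e. x0 \<le> fst p \<and> fst p < x0 + int M \<and> y0 \<le> snd p \<and> snd p < y0 + int M"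
      proof (intro ballI)
        fix v e p assume v: "v \<in> V" and e: "e \<in> set (P' v)" and p: "p \<in> e"
        have "p \<in> set (Q' v)" using edges_subset[of e "Q' v"] e p unfolding P'_def by auto
        show "x0 \<le> fst p \<and> fst p < x0 + int M \<and> y0 \<le> snd p \<and> snd p < y0 + int M"
        proof -
          have "x0 \<le> fst p \<and> fst p \<le> x0 + int (card V * (k + 2)) \<and> y0 \<le> snd p \<and> snd p \<le> y0 + int (card V * (k + 2))"
            using pts v \<open>p \<in> set (Q' v)\<close> by blast
          then show ?thesis unfolding M_def by simp
        qed
      qed
      then have "on_grid V P' M M" unfolding on_grid_def by blast
      then show ?thesis unfolding on_grid_at_most_def using M by blast
    qed
    show ?thesis using b h g by blast
  qed
  show ?thesis
  proof (intro conjI impI)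
    assume "\<exists>P. Bk_EPG_rep k V E P"
    then obtain P where "Bk_EPG_rep k V E P" by blast
    from key[OF this] show "\<exists>P. Bk_EPG_rep k V E P \<and> on_grid_at_most V P (4 * n * (k + 1))" by blast
  next
    assume "\<exists>P. Bk_EPG_rep k V E P \<and> helly_rep V P"
    then obtain P where P: "Bk_EPG_rep k V E P" "helly_rep V P" by blast
    from key[OF P(1)] P(2) show "\<exists>P. Bk_EPG_rep k V E P \<and> helly_rep V P \<and> on_grid_at_most V P (4 * n * (k + 1))" by blast
  qed
qed

end
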